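(* Let $(X,f)$ be a dynamical system. The following are equivalent: (1) $(X,f)$ is $\Delta$-transitive; (2) $(X,f)$ is $\mathcal{F}[\infty]$-point transitive; (3) $Trans_{\mathcal{F}[\infty]}(X,f)$ is residual in $X$.
   Context: A dynamical system is a pair $(X,f)$ with $X$ a compact metric space and $f:X\to X$ continuous. $\mathbb{N}=\{1,2,\dots\}$, $\mathbb{Z}_+=\{0,1,2,\dots\}$. $N(x,U)=\{n\in\mathbb{N}: f^n(x)\in U\}$. For a family $\mathcal{F}$ of subsets of $\mathbb{N}$, $x$ is an $\mathcal{F}$-transitive point if $N(x,U)\in\mathcal{F}$ for every non-empty open $U\subset X$; $Trans_{\mathcal{F}}(X,f)$ is the set of such points; $(X,f)$ is $\mathcal{F}$-point transitive if it is non-empty. For a system $(Y,g)$, $y$ is a transitive point if its $\omega$-limit set equals $Y$. $(X,f)$ is $\Delta$-transitive if for every $n\in\mathbb{N}$ there is $x\in X$ such that $(x,\dots,x)$ is a transitive point of $(X^n,f\times f^2\times\dots\times f^n)$. For $\mathbf{a}=(a_1,\dots,a_r)\in\mathbb{N}^r$, $\mathcal{F}[\mathbf{a}]$ is the collection of all $F\subset\mathbb{N}$ such that for every $(n_1,\dots,n_r)\in\mathbb{Z}_+^r$ there is $k\in\mathbb{N}$ with $ka_i+n_i\in F$ for all $i$; $\mathcal{F}[\infty]=\bigcap_{i=1}^\infty\mathcal{F}[(1,2,\dots,i)]$. *)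

theory Defs
  imports "HOL-Analysis.Analysis"
begin

definition dyn_system :: "'a::metric_space set \<Rightarrow> ('a \<Rightarrow> 'a) \<Rightarrow> bool" where
  "dyn_system X f \<longleftrightarrow> X \<noteq> {} \<and> compact X \<and> continuous_on X f \<and> f ` X \<subseteq> X"

definition hitting_times :: "('a \<Rightarrow> 'a) \<Rightarrow> 'a \<Rightarrow> 'a set \<Rightarrow> nat set" where
  "hitting_times f x U = {n. n \<ge> 1 \<and> (f ^^ n) x \<in> U}"

definition Trans_F :: "'a::metric_space set \<Rightarrow> ('a \<Rightarrow> 'a) \<Rightarrow> nat set set \<Rightarrow> 'a set" where
  "Trans_F X f \<F> = {x \<in> X. \<forall>U. openin (top_of_set X) U \<and> U \<noteq> {} \<longrightarrow> hitting_times f x U \<in> \<F>}"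

definition F_point_transitive :: "'a::metric_space set \<Rightarrow> ('a \<Rightarrow> 'a) \<Rightarrow> nat set set \<Rightarrow> bool" where
  "F_point_transitive X f \<F> \<longleftrightarrow> Trans_F X f \<F> \<noteq> {}"

definition F_vec :: "nat list \<Rightarrow> nat set set" where
  "F_vec a = {F. F \<subseteq> {1..} \<and>
     (\<forall>ns::nat list. length ns = length a \<longrightarrow>
        (\<exists>k\<ge>1. \<forall>i<length a. k * a ! i + ns ! i \<in> F))}"

definition F_infty :: "nat set set" where
  "F_infty = (\<Inter>i\<in>{1..}. F_vec [1..<i+1])"

definition omega_limit :: "'b topology \<Rightarrow> ('b \<Rightarrow> 'b) \<Rightarrow> 'b \<Rightarrow> 'b set" where
  "omega_limit T g y = {z \<in> topspace T. \<forall>U. openin T U \<and> z \<in> U \<longrightarrow>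
                          (\<forall>N. \<exists>k\<ge>N. (g ^^ k) y \<in> U)}"

definition transitive_point :: "'b topology \<Rightarrow> ('b \<Rightarrow> 'b) \<Rightarrow> 'b \<Rightarrow> bool" where
  "transitive_point T g y \<longleftrightarrow> omega_limit T g y = topspace T"

text \<open>Delta-transitivity. X^n is modelled as the product topology on extensional
  functions {1..n} \<rightarrow> X; the map is f \<times> f^2 \<times> ... \<times> f^n.\<close>
definition Delta_transitive :: "'a::metric_space set \<Rightarrow> ('a \<Rightarrow> 'a) \<Rightarrow> bool" where
  "Delta_transitive X f \<longleftrightarrow>
     (\<forall>n::nat. n \<ge> 1 \<longrightarrow> (\<exists>x\<in>X.
        transitive_point (product_topology (\<lambda>_. top_of_set X) {1..n})
          (\<lambda>y. restrict (\<lambda>i. (f ^^ i) (y i)) {1..n})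
          (restrict (\<lambda>_. x) {1..n})))"

definition residual_in :: "'a::metric_space set \<Rightarrow> 'a set \<Rightarrow> bool" where
  "residual_in X S \<longleftrightarrow> S \<subseteq> X \<and>
     (\<exists>\<U>. countable \<U> \<and> (\<forall>U\<in>\<U>. openin (top_of_set X) U \<and> X \<subseteq> closure U) \<and>
          X \<inter> \<Inter>\<U> \<subseteq> S)"

end

theory Submission
  imports Defs
begin

lemma funpow_add_apply: "((f::'a\<Rightarrow>'a) ^^ (m + n)) x = (f ^^ m) ((f ^^ n) x)"
  by (simp add: funpow_add)

lemma iter_in: "f ` X \<subseteq> X \<Longrightarrow> x \<in> X \<Longrightarrow> (f ^^ m) x \<in> X"
  by (induction m) auto

lemma cont_iter: "continuous_on X f \<Longrightarrow> f ` X \<subseteq> X \<Longrightarrow> continuous_on X (f ^^ m)"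
proof (induction m)
  case 0 then show ?case by (simp add: continuous_on_id)
next
  case (Suc m)
  have "(f ^^ Suc m) = f \<circ> (f ^^ m)" by simp
  moreover have "(f ^^ m) ` X \<subseteq> X" using iter_in[OF Suc.prems(2)] by blast
  ultimately show ?case
    using Suc continuous_on_compose continuous_on_subset by metis
qed

lemma g_iter:
  fixes f :: "'a \<Rightarrow> 'a"
  shows "((\<lambda>y. restrict (\<lambda>i. (f ^^ i) (y i)) {1..n}) ^^ k) (restrict h {1..n})
     = restrict (\<lambda>i. (f ^^ (i*k)) (h i)) {1..n}"
proof (induction k)
  case 0 then show ?case by simp
next
  case (Suc k)
  show ?case
    by (simp only: funpow.simps comp_apply Suc.IH)
      (simp add: restrict_def fun_eq_iff funpow_add_apply mult_Suc_right)
qed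

definition Wset :: "'a set \<Rightarrow> ('a \<Rightarrow> 'a) \<Rightarrow> 'a set \<Rightarrow> nat list \<Rightarrow> 'a set" where
  "Wset X f V ns = {y\<in>X. \<exists>k\<ge>1. \<forall>i<length ns. (f ^^ (k * Suc i + ns ! i)) y \<in> V}"

lemma Trans_char:
  "x \<in> Trans_F X f F_infty \<longleftrightarrow> x \<in> X \<and>
     (\<forall>U ns. openin (top_of_set X) U \<and> U \<noteq> {} \<longrightarrow> x \<in> Wset X f U ns)"
proof
  assume x: "x \<in> Trans_F X f F_infty"
  show "x \<in> X \<and> (\<forall>U ns. openin (top_of_set X) U \<and> U \<noteq> {} \<longrightarrow> x \<in> Wset X f U ns)"
  proof (intro conjI allI impI)
    show "x \<in> X" using x by (simp add: Trans_F_def)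
    fix U ns assume U: "openin (top_of_set X) U \<and> U \<noteq> {}"
    show "x \<in> Wset X f U ns"
    proof (cases "ns = []")
      case True then show ?thesis using \<open>x \<in> X\<close> by (auto simp: Wset_def)
    next
      case False
      then have "length ns \<in> {1..}" by (simp add: Suc_le_eq)
      then have "hitting_times f x U \<in> F_vec [1..<length ns + 1]"
        using x U by (auto simp: Trans_F_def F_infty_def)
      then have H: "\<forall>ns'::nat list. length ns' = length [1..<length ns + 1] \<longrightarrow>
        (\<exists>k\<ge>1. \<forall>i<length [1..<length ns + 1]. k * [1..<length ns + 1] ! i + ns' ! i \<in> hitting_times f x U)"
        unfolding F_vec_def by blast
      have "length ns = length [1..<length ns + 1]" by (simp only: length_upt)
      from H[rule_format, OF this] obtain k where "k \<ge> 1" "\<forall>i<length [1..<length ns + 1]. k * [1..<length ns + 1] ! i + ns ! i \<in> hitting_times f x U"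
        by blast
      then show ?thesis using \<open>x \<in> X\<close>
        by (auto simp del: upt_Suc simp: Wset_def hitting_times_def nth_upt intro!: exI[of _ k])
    qed
  qed
next
  assume R: "x \<in> X \<and> (\<forall>U ns. openin (top_of_set X) U \<and> U \<noteq> {} \<longrightarrow> x \<in> Wset X f U ns)"
  show "x \<in> Trans_F X f F_infty"
    unfolding Trans_F_def F_infty_def
  proof (intro CollectI conjI allI impI)
    show "x \<in> X" using R by simp
    fix U assume U: "openin (top_of_set X) U \<and> U \<noteq> {}"
    show "hitting_times f x U \<in> (\<Inter>i\<in>{1..}. F_vec [1..<i + 1])"
    proof (intro INT_I)
      fix r :: nat
      show "hitting_times f x U \<in> F_vec [1..<r + 1]"
        unfolding F_vec_def
      proof (intro CollectI conjI allI impI)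
        show "hitting_times f x U \<subseteq> {1..}" by (auto simp: hitting_times_def)
        fix ns :: "nat list" assume "length ns = length [1..<r + 1]"
        then have len: "length ns = r" by simp
        from R U have "x \<in> Wset X f U ns" by blast
        then obtain k where "k \<ge> 1" "\<forall>i<length ns. (f ^^ (k * Suc i + ns ! i)) x \<in> U"
          by (auto simp: Wset_def)
        then show "\<exists>k\<ge>1. \<forall>i<length [1..<r + 1]. k * [1..<r + 1] ! i + ns ! i \<in> hitting_times f x U"
          using len by (auto simp del: upt_Suc simp: hitting_times_def nth_upt intro!: exI[of _ k])
      qed
    qed
  qed
qed


lemma openin_preimage_iter:
  assumes "continuous_on X f" "f ` X \<subseteq> X" "openin (top_of_set X) V"
  shows "openin (top_of_set X) (X \<inter> (f ^^ m) -` V)"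
  by (rule continuous_openin_preimage[OF cont_iter[OF assms(1,2)]])
     (use iter_in[OF assms(2)] assms(3) in auto)

lemma Wset_open:
  assumes "continuous_on X f" "f ` X \<subseteq> X" "openin (top_of_set X) V"
  shows "openin (top_of_set X) (Wset X f V ns)"
proof -
  have eq: "Wset X f V ns = (\<Union>k\<in>{1..}. (\<Inter>i\<in>{..<length ns}. X \<inter> (f ^^ (k * Suc i + ns ! i)) -` V) \<inter> topspace (top_of_set X))"
    by (auto simp: Wset_def)
  show ?thesis unfolding eq
  proof (rule openin_Union)
    fix S assume "S \<in> (\<lambda>k. (\<Inter>i\<in>{..<length ns}. X \<inter> (f ^^ (k * Suc i + ns ! i)) -` V) \<inter> topspace (top_of_set X)) ` {1..}"
    then obtain k where "S = (\<Inter>i\<in>{..<length ns}. X \<inter> (f ^^ (k * Suc i + ns ! i)) -` V) \<inter> topspace (top_of_set X)"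
      by blast
    then show "openin (top_of_set X) S"
      using openin_INT[of "{..<length ns}" "top_of_set X" "\<lambda>i. X \<inter> (f ^^ (k * Suc i + ns ! i)) -` V"]
        openin_preimage_iter[OF assms] by blast
  qed
qed

lemma Wset_mono: "V \<subseteq> V' \<Longrightarrow> Wset X f V ns \<subseteq> Wset X f V' ns"
  by (auto simp: Wset_def)

lemma Wset_shift:
  assumes "f ` X \<subseteq> X" "x \<in> X" "x \<in> Wset X f V (map (\<lambda>n. n + m) ns)"
  shows "(f ^^ m) x \<in> Wset X f V ns"
proof -
  obtain k where k: "k \<ge> 1" "\<forall>i<length ns. (f ^^ (k * Suc i + (ns ! i + m))) x \<in> V"
    using assms(3) by (auto simp: Wset_def)
  have "(f ^^ (k * Suc i + ns ! i)) ((f ^^ m) x) \<in> V" if "i < length ns" for i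
    using k(2) that by (simp add: funpow_add_apply[symmetric] add.assoc)
  then show ?thesis using k(1) iter_in[OF assms(1,2)] by (auto simp: Wset_def)
qed

definition Dn :: "'a::metric_space set \<Rightarrow> ('a \<Rightarrow> 'a) \<Rightarrow> bool" where
  "Dn X f \<longleftrightarrow> (\<forall>V ns V'. openin (top_of_set X) V \<and> V \<noteq> {} \<and> openin (top_of_set X) V' \<and> V' \<noteq> {}
      \<longrightarrow> Wset X f V ns \<inter> V' \<noteq> {})"

lemma trans_Dn:
  assumes "f ` X \<subseteq> X" "x \<in> Trans_F X f F_infty"
  shows "Dn X f"
  unfolding Dn_def
proof (intro allI impI)
  fix V ns V'
  assume H: "openin (top_of_set X) V \<and> V \<noteq> {} \<and> openin (top_of_set X) V' \<and> V' \<noteq> {}"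
  from assms(2) have x: "x \<in> X" "\<And>U ns. openin (top_of_set X) U \<Longrightarrow> U \<noteq> {} \<Longrightarrow> x \<in> Wset X f U ns"
    by (auto simp: Trans_char)
  from x(2)[of V' "[0]"] H obtain k where "(f ^^ k) x \<in> V'"
    by (auto simp: Wset_def)
  moreover have "(f ^^ k) x \<in> Wset X f V ns"
    using Wset_shift[OF assms(1) x(1) x(2)] H by blast
  ultimately show "Wset X f V ns \<inter> V' \<noteq> {}" by blast
qed

lemma countable_base:
  fixes X :: "'a::metric_space set"
  assumes "compact X"
  shows "\<exists>B. countable B \<and> (\<forall>V\<in>B. openin (top_of_set X) V \<and> V \<noteq> {}) \<and>
             (\<forall>U. openin (top_of_set X) U \<and> U \<noteq> {} \<longrightarrow> (\<exists>V\<in>B. V \<subseteq> U))"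
proof -
  have tb: "\<forall>e>0. \<exists>k. finite k \<and> k \<subseteq> X \<and> X \<subseteq> (\<Union>x\<in>k. ball x e)"
    by (rule seq_compact_imp_totally_bounded[OF compact_imp_seq_compact[OF assms]])
  have "\<forall>m::nat. \<exists>k. finite k \<and> k \<subseteq> X \<and> X \<subseteq> (\<Union>x\<in>k. ball x (inverse (real (Suc m))))"
    using tb by simp
  then obtain K where K: "\<And>m. finite (K m) \<and> K m \<subseteq> X \<and> X \<subseteq> (\<Union>x\<in>K m. ball x (inverse (real (Suc m))))"
    by metis
  define B where "B = (\<lambda>(m, c). X \<inter> ball c (inverse (real (Suc m)))) ` (SIGMA m:UNIV. K m)"
  have "countable B" unfolding B_def
    using K by (intro countable_image countable_SIGMA) (auto intro: countable_finite)
  moreover have "\<forall>V\<in>B. openin (top_of_set X) V \<and> V \<noteq> {}"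
    unfolding B_def using K by (force intro: openin_open_Int)
  moreover have "\<exists>V\<in>B. V \<subseteq> U" if U: "openin (top_of_set X) U" "U \<noteq> {}" for U
  proof -
    obtain p where p: "p \<in> U" using U by blast
    then obtain e where e: "e > 0" "\<And>x'. x' \<in> X \<Longrightarrow> dist x' p < e \<Longrightarrow> x' \<in> U"
      using U(1) unfolding openin_euclidean_subtopology_iff by blast
    obtain m where m: "inverse (real (Suc m)) < e / 2"
      using reals_Archimedean[of "e/2"] e(1) by auto
    have "p \<in> X" using U(1) p openin_imp_subset by blast
    then obtain c where c: "c \<in> K m" "p \<in> ball c (inverse (real (Suc m)))" using K by blast
    have "X \<inter> ball c (inverse (real (Suc m))) \<subseteq> U"
    proof
      fix y assume y: "y \<in> X \<inter> ball c (inverse (real (Suc m)))"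
      have "dist y p \<le> dist y c + dist c p" by (rule dist_triangle)
      also have "\<dots> < e" using y c m by (simp add: dist_commute)
      finally show "y \<in> U" using e y by blast
    qed
    moreover have "X \<inter> ball c (inverse (real (Suc m))) \<in> B" unfolding B_def using c by force
    ultimately show ?thesis by blast
  qed
  ultimately show ?thesis by blast
qed

lemma Dn_residual:
  assumes "dyn_system X f" "Dn X f"
  shows "residual_in X (Trans_F X f F_infty)"
proof -
  have ds: "compact X" "continuous_on X f" "f ` X \<subseteq> X" using assms(1) by (auto simp: dyn_system_def)
  obtain B where B: "countable B" "\<And>V. V\<in>B \<Longrightarrow> openin (top_of_set X) V \<and> V \<noteq> {}"
     "\<And>U. openin (top_of_set X) U \<Longrightarrow> U \<noteq> {} \<Longrightarrow> (\<exists>V\<in>B. V \<subseteq> U)"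
    using countable_base[OF ds(1)] by metis
  define \<U> where "\<U> = (\<lambda>(V, ns). Wset X f V ns) ` (B \<times> UNIV)"
  have "countable \<U>" unfolding \<U>_def using B(1) by auto
  moreover have "openin (top_of_set X) U \<and> X \<subseteq> closure U" if "U \<in> \<U>" for U
  proof -
    obtain V ns where V: "V \<in> B" "U = Wset X f V ns" using \<open>U \<in> \<U>\<close> unfolding \<U>_def by auto
    have "openin (top_of_set X) U" using V B(2) Wset_open[OF ds(2,3)] by blast
    moreover have "X \<subseteq> closure U"
    proof
      fix p assume p: "p \<in> X"
      show "p \<in> closure U" unfolding closure_approachable
      proof (intro allI impI)
        fix e :: real assume e: "e > 0"
        have "openin (top_of_set X) (X \<inter> ball p e)" by (simp add: openin_open_Int)
        moreover have "X \<inter> ball p e \<noteq> {}" using p e by auto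
        ultimately have "Wset X f V ns \<inter> (X \<inter> ball p e) \<noteq> {}"
          using assms(2) B(2)[OF V(1)] unfolding Dn_def by blast
        then show "\<exists>y\<in>U. dist y p < e" using V(2) by (auto simp: dist_commute)
      qed
    qed
    ultimately show ?thesis by blast
  qed
  moreover have "X \<inter> \<Inter>\<U> \<subseteq> Trans_F X f F_infty"
  proof
    fix x assume x: "x \<in> X \<inter> \<Inter>\<U>"
    show "x \<in> Trans_F X f F_infty" unfolding Trans_char
    proof (intro conjI allI impI)
      show "x \<in> X" using x by blast
      fix U ns assume "openin (top_of_set X) U \<and> U \<noteq> {}"
      then obtain V where V: "V \<in> B" "V \<subseteq> U" using B(3) by blast
      have "Wset X f V ns \<in> \<U>" unfolding \<U>_def using V by force
      then have "x \<in> Wset X f V ns" using x by blast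
      then show "x \<in> Wset X f U ns" using Wset_mono[OF V(2)] by blast
    qed
  qed
  moreover have "Trans_F X f F_infty \<subseteq> X" by (auto simp: Trans_F_def)
  ultimately show ?thesis unfolding residual_in_def by blast
qed

lemma residual_nonempty:
  assumes "dyn_system X f" "residual_in X S"
  shows "S \<noteq> {}"
proof -
  have ds: "compact X" "X \<noteq> {}" using assms(1) by (auto simp: dyn_system_def)
  obtain \<U> where U: "countable \<U>" "\<And>U. U\<in>\<U> \<Longrightarrow> openin (top_of_set X) U \<and> X \<subseteq> closure U"
    "X \<inter> \<Inter>\<U> \<subseteq> S"
    using assms(2) unfolding residual_in_def by blast
  have lc: "locally_compact_space (top_of_set X)"
    by (rule compact_imp_locally_compact_space, rule compact_space_subtopology) (simp add: ds(1))
  have rs: "regular_space (top_of_set X)"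
    by (rule regular_space_subtopology, rule metrizable_imp_regular_space, rule metrizable_space_euclidean)
  have cl: "(top_of_set X) closure_of T = X \<inter> closure (X \<inter> T)" for T
    by (simp add: closure_of_subtopology euclidean_closure_of)
  have "(top_of_set X) closure_of \<Inter>\<U> = topspace (top_of_set X)"
  proof (rule Baire_category)
    show "completely_metrizable_space (top_of_set X) \<or>
          locally_compact_space (top_of_set X) \<and> regular_space (top_of_set X)" using lc rs by blast
    show "countable \<U>" by (rule U(1))
    fix T assume T: "T \<in> \<U>"
    have "T \<subseteq> X" using U(2)[OF T] openin_imp_subset by blast
    then show "openin (top_of_set X) T \<and> (top_of_set X) closure_of T = topspace (top_of_set X)"
      using U(2)[OF T] cl[of T] by (auto simp: Int_absorb1)
  qed
  then have "X \<inter> closure (X \<inter> \<Inter>\<U>) = X" using cl by simp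
  then have "X \<inter> \<Inter>\<U> \<noteq> {}" using ds(2) by auto
  then show ?thesis using U(3) by blast
qed


definition Pdiag :: "'a::metric_space set \<Rightarrow> ('a \<Rightarrow> 'a) \<Rightarrow> 'a \<Rightarrow> nat \<Rightarrow> bool" where
  "Pdiag X f x n \<longleftrightarrow> (\<forall>A N. (\<forall>j\<in>{1..n}. openin (top_of_set X) (A j) \<and> A j \<noteq> {}) \<longrightarrow>
      (\<exists>k\<ge>N. \<forall>j\<in>{1..n}. (f ^^ (j * k)) x \<in> A j))"

lemma Pdiag_imp_transitive:
  fixes f :: "'a::metric_space \<Rightarrow> 'a"
  assumes "Pdiag X f x n"
  shows "transitive_point (product_topology (\<lambda>_. top_of_set X) {1..n})
          (\<lambda>y. restrict (\<lambda>i. (f ^^ i) (y i)) {1..n}) (restrict (\<lambda>_. x) {1..n})"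
  unfolding transitive_point_def omega_limit_def
proof (intro set_eqI iffI)
  fix z assume z: "z \<in> topspace (product_topology (\<lambda>_. top_of_set X) {1..n})"
  show "z \<in> {z \<in> topspace (product_topology (\<lambda>_. top_of_set X) {1..n}).
          \<forall>U. openin (product_topology (\<lambda>_. top_of_set X) {1..n}) U \<and> z \<in> U \<longrightarrow>
              (\<forall>N. \<exists>k\<ge>N. (((\<lambda>y. restrict (\<lambda>i. (f ^^ i) (y i)) {1..n}) ^^ k) (restrict (\<lambda>_. x) {1..n})) \<in> U)}"
  proof (intro CollectI conjI allI impI)
    show "z \<in> topspace (product_topology (\<lambda>_. top_of_set X) {1..n})" by (rule z)
    fix U N assume U: "openin (product_topology (\<lambda>_. top_of_set X) {1..n}) U \<and> z \<in> U"
    then obtain V where V: "\<forall>i\<in>{1..n}. openin (top_of_set X) (V i)" "z \<in> Pi\<^sub>E {1..n} V"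
      "Pi\<^sub>E {1..n} V \<subseteq> U"
      unfolding openin_product_topology_alt by (metis topspace_euclidean_subtopology)
    have "\<forall>j\<in>{1..n}. openin (top_of_set X) (V j) \<and> V j \<noteq> {}" using V(1,2) by (auto simp: PiE_iff)
    then obtain k where k: "k \<ge> N" "\<forall>j\<in>{1..n}. (f ^^ (j * k)) x \<in> V j"
      using assms unfolding Pdiag_def by blast
    have "(((\<lambda>y. restrict (\<lambda>i. (f ^^ i) (y i)) {1..n}) ^^ k) (restrict (\<lambda>_. x) {1..n}))
           = restrict (\<lambda>i. (f ^^ (i*k)) x) {1..n}" by (rule g_iter)
    also have "\<dots> \<in> Pi\<^sub>E {1..n} V" using k(2) by auto
    finally show "\<exists>k\<ge>N. (((\<lambda>y. restrict (\<lambda>i. (f ^^ i) (y i)) {1..n}) ^^ k) (restrict (\<lambda>_. x) {1..n})) \<in> U"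
      using k(1) V(3) by blast
  qed
qed auto

lemma transitive_imp_Pdiag:
  fixes f :: "'a::metric_space \<Rightarrow> 'a"
  assumes "transitive_point (product_topology (\<lambda>_. top_of_set X) {1..n})
          (\<lambda>y. restrict (\<lambda>i. (f ^^ i) (y i)) {1..n}) (restrict (\<lambda>_. x) {1..n})"
  shows "Pdiag X f x n"
  unfolding Pdiag_def
proof (intro allI impI)
  fix A :: "nat \<Rightarrow> 'a set" and N :: nat
  assume A: "\<forall>j\<in>{1..n}. openin (top_of_set X) (A j) \<and> A j \<noteq> {}"
  define z where "z = restrict (\<lambda>j. SOME a. a \<in> A j) {1..n}"
  have zA: "z \<in> Pi\<^sub>E {1..n} A" unfolding z_def using A by (auto simp: some_in_eq)
  have AX: "A j \<subseteq> X" if "j \<in> {1..n}" for j using A that openin_imp_subset by blast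
  have zt: "z \<in> topspace (product_topology (\<lambda>_. top_of_set X) {1..n})"
    using zA AX by (force simp: PiE_iff)
  have op: "openin (product_topology (\<lambda>_. top_of_set X) {1..n}) (Pi\<^sub>E {1..n} A)"
    unfolding openin_PiE_gen using A by auto
  from assms zt have "z \<in> omega_limit (product_topology (\<lambda>_. top_of_set X) {1..n})
          (\<lambda>y. restrict (\<lambda>i. (f ^^ i) (y i)) {1..n}) (restrict (\<lambda>_. x) {1..n})"
    unfolding transitive_point_def by simp
  then obtain k where k: "k \<ge> N" "(((\<lambda>y. restrict (\<lambda>i. (f ^^ i) (y i)) {1..n}) ^^ k) (restrict (\<lambda>_. x) {1..n})) \<in> Pi\<^sub>E {1..n} A"
    unfolding omega_limit_def using op zA by blast
  have "restrict (\<lambda>i. (f ^^ (i*k)) x) {1..n} \<in> Pi\<^sub>E {1..n} A"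
    using k(2) by (simp only: g_iter)
  then show "\<exists>k\<ge>N. \<forall>j\<in>{1..n}. (f ^^ (j * k)) x \<in> A j"
    using k(1) by (intro exI[of _ k]) (auto simp: PiE_iff)
qed

lemma Delta_iff_Pdiag:
  fixes f :: "'a::metric_space \<Rightarrow> 'a"
  shows "Delta_transitive X f \<longleftrightarrow> (\<forall>n\<ge>1. \<exists>x\<in>X. Pdiag X f x n)"
  unfolding Delta_transitive_def
proof (intro iffI allI impI)
  fix n :: nat assume n: "n \<ge> 1"
  assume H: "\<forall>n\<ge>1. \<exists>x\<in>X. transitive_point (product_topology (\<lambda>_. top_of_set X) {1..n})
          (\<lambda>y. restrict (\<lambda>i. (f ^^ i) (y i)) {1..n}) (restrict (\<lambda>_. x) {1..n})"
  then obtain x where "x \<in> X" "transitive_point (product_topology (\<lambda>_. top_of_set X) {1..n})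
          (\<lambda>y. restrict (\<lambda>i. (f ^^ i) (y i)) {1..n}) (restrict (\<lambda>_. x) {1..n})"
    using n by blast
  then show "\<exists>x\<in>X. Pdiag X f x n" using transitive_imp_Pdiag by blast
next
  fix n :: nat assume n: "n \<ge> 1"
  assume H: "\<forall>n\<ge>1. \<exists>x\<in>X. Pdiag X f x n"
  then obtain x where "x \<in> X" "Pdiag X f x n" using n by blast
  then show "\<exists>x\<in>X. transitive_point (product_topology (\<lambda>_. top_of_set X) {1..n})
          (\<lambda>y. restrict (\<lambda>i. (f ^^ i) (y i)) {1..n}) (restrict (\<lambda>_. x) {1..n})"
    using Pdiag_imp_transitive by blast
qed


lemma trans_Pdiag:
  assumes "continuous_on X f" "f ` X \<subseteq> X" "x \<in> Trans_F X f F_infty"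
  shows "Pdiag X f x n"
  unfolding Pdiag_def
proof (intro allI impI)
  fix A :: "nat \<Rightarrow> 'a set" and N :: nat
  assume A: "\<forall>j\<in>{1..n}. openin (top_of_set X) (A j) \<and> A j \<noteq> {}"
  from assms(3) have x: "x \<in> X" "\<And>U ns. openin (top_of_set X) U \<Longrightarrow> U \<noteq> {} \<Longrightarrow> x \<in> Wset X f U ns"
    by (auto simp: Trans_char)
  have "\<exists>a. (f ^^ a) x \<in> A j" if "j \<in> {1..n}" for j
  proof -
    from x(2)[of "A j" "[0]"] A that obtain k where "(f ^^ (k * 1 + 0)) x \<in> A j"
      by (auto simp: Wset_def)
    then show ?thesis by auto
  qed
  then obtain a where a: "\<And>j. j \<in> {1..n} \<Longrightarrow> (f ^^ a j) x \<in> A j" by metis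
  define c where "c = N + sum a {1..n}"
  have ac: "a j \<le> c" if "j \<in> {1..n}" for j
  proof -
    have "a j \<le> sum a {1..n}" using that by (intro member_le_sum) auto
    then show ?thesis unfolding c_def by simp
  qed
  define W0 where "W0 = (\<Inter>j\<in>{1..n}. X \<inter> (f ^^ a j) -` A j) \<inter> topspace (top_of_set X)"
  have W0o: "openin (top_of_set X) W0" unfolding W0_def
    by (rule openin_INT) (use A openin_preimage_iter[OF assms(1,2)] in auto)
  have "x \<in> W0" unfolding W0_def using x(1) a by auto
  then have W0ne: "W0 \<noteq> {}" by blast
  define ns where "ns = map (\<lambda>i. c * Suc i - a (Suc i)) [0..<n]"
  from x(2)[OF W0o W0ne, of ns] obtain k where k: "k \<ge> 1"
    "\<And>i. i < n \<Longrightarrow> (f ^^ (k * Suc i + (c * Suc i - a (Suc i)))) x \<in> W0"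
    by (auto simp: Wset_def ns_def)
  show "\<exists>k\<ge>N. \<forall>j\<in>{1..n}. (f ^^ (j * k)) x \<in> A j"
  proof (intro exI[of _ "k + c"] conjI ballI)
    show "N \<le> k + c" unfolding c_def by simp
    fix j assume j: "j \<in> {1..n}"
    then obtain i where i: "j = Suc i" "i < n" by (cases j) auto
    have "(f ^^ (k * j + (c * j - a j))) x \<in> W0" using k(2)[OF i(2)] i(1) by simp
    then have "(f ^^ a j) ((f ^^ (k * j + (c * j - a j))) x) \<in> A j"
      using j unfolding W0_def by auto
    moreover have "a j + (k * j + (c * j - a j)) = j * (k + c)"
    proof -
      have "a j \<le> c" using ac j by blast
      also have "c \<le> c * j" using j by simp
      finally show ?thesis by (simp add: algebra_simps)
    qed
    ultimately show "(f ^^ (j * (k + c))) x \<in> A j"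
      by (metis funpow_add_apply)
  qed
qed

lemma Delta_Dn:
  assumes "continuous_on X f" "f ` X \<subseteq> X" "Delta_transitive X f"
  shows "Dn X f"
  unfolding Dn_def
proof (intro allI impI)
  fix V V' :: "'a set" and ns :: "nat list"
  assume H: "openin (top_of_set X) V \<and> V \<noteq> {} \<and> openin (top_of_set X) V' \<and> V' \<noteq> {}"
  have P: "\<forall>n\<ge>1. \<exists>x\<in>X. Pdiag X f x n" using assms(3) Delta_iff_Pdiag by blast
  obtain x1 where x1: "x1 \<in> X" "Pdiag X f x1 1" using P by blast
  define r where "r = length ns"
  obtain x where x: "x \<in> X" "Pdiag X f x (r + 1)" using P by fastforce
  define B where "B i = X \<inter> (f ^^ (ns ! i)) -` V" for i
  have Bo: "openin (top_of_set X) (B i)" for i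
    unfolding B_def using openin_preimage_iter[OF assms(1,2)] H by blast
  have Bne: "B i \<noteq> {}" for i
  proof -
    have "\<forall>j\<in>{1..1}. openin (top_of_set X) ((\<lambda>_. V) j) \<and> (\<lambda>_. V) j \<noteq> {}" using H by simp
    then obtain k where k: "k \<ge> ns ! i" "(f ^^ (1 * k)) x1 \<in> V"
      using x1(2) unfolding Pdiag_def by fastforce
    have "(f ^^ (ns ! i + (k - ns ! i))) x1 \<in> V" using k by simp
    then have "(f ^^ (ns ! i)) ((f ^^ (k - ns ! i)) x1) \<in> V" by (simp only: funpow_add_apply)
    moreover have "(f ^^ (k - ns ! i)) x1 \<in> X" using iter_in[OF assms(2) x1(1)] .
    ultimately show ?thesis unfolding B_def by blast
  qed
  define A where "A j = (if j = 1 then V' else B (j - 2))" for j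
  have "\<forall>j\<in>{1..r+1}. openin (top_of_set X) (A j) \<and> A j \<noteq> {}"
    unfolding A_def using H Bo Bne by auto
  then obtain k where k: "k \<ge> 1" "\<forall>j\<in>{1..r+1}. (f ^^ (j * k)) x \<in> A j"
    using x(2) unfolding Pdiag_def by blast
  have y: "(f ^^ k) x \<in> V'" using k(2)[rule_format, of 1] by (simp add: A_def)
  have "(f ^^ k) x \<in> Wset X f V ns"
    unfolding Wset_def
  proof (intro CollectI conjI exI[of _ k] allI impI)
    show "(f ^^ k) x \<in> X" using iter_in[OF assms(2) x(1)] .
    show "1 \<le> k" by (rule k(1))
    fix i assume i: "i < length ns"
    have "(f ^^ (Suc (Suc i) * k)) x \<in> B i"
      using k(2)[rule_format, of "Suc (Suc i)"] i unfolding r_def A_def by simp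
    then have "(f ^^ (ns ! i)) ((f ^^ (Suc (Suc i) * k)) x) \<in> V" unfolding B_def by blast
    moreover have "k * Suc i + ns ! i + k = ns ! i + Suc (Suc i) * k" by simp
    ultimately show "(f ^^ (k * Suc i + ns ! i)) ((f ^^ k) x) \<in> V"
      by (metis funpow_add_apply)
  qed
  then show "Wset X f V ns \<inter> V' \<noteq> {}" using y by blast
qed

theorem theorem5p7:
  fixes X :: "'a::metric_space set" and f :: "'a \<Rightarrow> 'a"
  assumes "dyn_system X f"
  shows "(Delta_transitive X f \<longleftrightarrow> F_point_transitive X f F_infty)
       \<and> (F_point_transitive X f F_infty \<longleftrightarrow> residual_in X (Trans_F X f F_infty))"
proof -
  have ds: "continuous_on X f" "f ` X \<subseteq> X" using assms by (auto simp: dyn_system_def)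
  have PR: "F_point_transitive X f F_infty \<Longrightarrow> residual_in X (Trans_F X f F_infty)"
    using Dn_residual[OF assms] trans_Dn[OF ds(2)] unfolding F_point_transitive_def by blast
  have RP: "residual_in X (Trans_F X f F_infty) \<Longrightarrow> F_point_transitive X f F_infty"
    using residual_nonempty[OF assms] unfolding F_point_transitive_def by blast
  have DP: "Delta_transitive X f \<Longrightarrow> F_point_transitive X f F_infty"
    using RP Dn_residual[OF assms] Delta_Dn[OF ds] by blast
  have PD: "F_point_transitive X f F_infty \<Longrightarrow> Delta_transitive X f"
  proof -
    assume "F_point_transitive X f F_infty"
    then obtain x where x: "x \<in> Trans_F X f F_infty" unfolding F_point_transitive_def by blast
    then have "x \<in> X" by (simp add: Trans_F_def)
    then show "Delta_transitive X f"
      unfolding Delta_iff_Pdiag using trans_Pdiag[OF ds x] by blast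
  qed
  show ?thesis using PR RP DP PD by blast
qed

end
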